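(* Let $X$ be a finite-dimensional real Hilbert space and $A,B$ closed convex subsets of $X$ with $\operatorname{ri}A\cap\operatorname{ri}B\ne\varnothing$. Let $L=\operatorname{aff}(A\cup B)$ and $T=P_BR_A+\mathrm{Id}-P_A$. Then for every $\rho>0$ there exists $\kappa>0$ such that $\|x-Tx\|\ge\kappa\,d_{A\cap B}(x)$ for all $x\in L$ with $\|x\|\le\rho$.
   Context: $P_S$ is the metric projection onto a closed convex set $S$, $R_S=2P_S-\mathrm{Id}$, $d_S$ the distance function, $\operatorname{aff}$ the affine hull, $\operatorname{ri}$ the relative interior. *)

theory Defs
  imports "HOL-Analysis.Analysis"
begin

text \<open>Metric projection P_S is the library's closest_point S; reflector R_S = 2 P_S - Id.\<close>
definition reflector :: "'a::euclidean_space set \<Rightarrow> 'a \<Rightarrow> 'a" where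
  "reflector S x = 2 *\<^sub>R closest_point S x - x"

definition drT :: "'a::euclidean_space set \<Rightarrow> 'a set \<Rightarrow> 'a \<Rightarrow> 'a" where
  "drT A B x = closest_point B (reflector A x) + x - closest_point A x"

end

theory Submission imports Defs begin

lemma decomp:
  fixes S T :: "'a::euclidean_space set"
  obtains K where "K > 0" and "\<And>v. v \<in> span (S \<union> T) \<Longrightarrow> \<exists>p q. p \<in> span S \<and> q \<in> span T \<and> v = p + q \<and> norm p \<le> K * norm v \<and> norm q \<le> K * norm v"
proof -
  obtain C where C: "C \<subseteq> span (S \<union> T)" "independent C" "span (S \<union> T) \<subseteq> span C" "card C = dim (span (S \<union> T))"
    by (rule basis_exists)
  have "\<forall>c\<in>C. \<exists>p. p \<in> span S \<and> c - p \<in> span T"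
  proof
    fix c assume "c \<in> C"
    then have "c \<in> span (S \<union> T)" using C by auto
    then obtain p q where "p \<in> span S" "q \<in> span T" "c = p + q" unfolding span_Un by blast
    then show "\<exists>p. p \<in> span S \<and> c - p \<in> span T" by auto
  qed
  then obtain f where f: "\<And>c. c \<in> C \<Longrightarrow> f c \<in> span S \<and> c - f c \<in> span T" by metis
  obtain g where g: "linear g" "\<And>x. x \<in> C \<Longrightarrow> g x = f x"
    using linear_independent_extend[OF C(2)] by blast
  obtain B where B: "B > 0" "\<And>x. norm (g x) \<le> B * norm x"
    using linear_bounded_pos[OF g(1)] by blast
  have sub: "subspace {v. g v \<in> span S \<and> v - g v \<in> span T}"
  proof (unfold subspace_def, intro conjI ballI allI)
    show "0 \<in> {v. g v \<in> span S \<and> v - g v \<in> span T}" using linear_0[OF g(1)] by (simp add: span_zero)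
  next
    fix x y assume "x \<in> {v. g v \<in> span S \<and> v - g v \<in> span T}" "y \<in> {v. g v \<in> span S \<and> v - g v \<in> span T}"
    then have h: "g x \<in> span S" "x - g x \<in> span T" "g y \<in> span S" "y - g y \<in> span T" by auto
    have eqn: "x + y - g (x + y) = (x - g x) + (y - g y)" using linear_add[OF g(1)] by (simp add: algebra_simps)
    have "x + y - g (x + y) \<in> span T" unfolding eqn by (rule span_add[OF h(2) h(4)])
    moreover have "g (x + y) \<in> span S" unfolding linear_add[OF g(1)] by (rule span_add[OF h(1) h(3)])
    ultimately show "x + y \<in> {v. g v \<in> span S \<and> v - g v \<in> span T}" by simp
  next
    fix c x assume "x \<in> {v. g v \<in> span S \<and> v - g v \<in> span T}"
    then have h: "g x \<in> span S" "x - g x \<in> span T" by auto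
    have "c *\<^sub>R x - g (c *\<^sub>R x) = c *\<^sub>R (x - g x)" using linear_scale[OF g(1)] by (simp add: algebra_simps)
    then show "c *\<^sub>R x \<in> {v. g v \<in> span S \<and> v - g v \<in> span T}"
      using h linear_scale[OF g(1)] by (simp add: span_scale)
  qed
  show ?thesis
  proof (rule that[of "B + 1"])
    show "B + 1 > 0" using B by simp
    fix v assume v: "v \<in> span (S \<union> T)"
    then have "v \<in> span C" using C by auto
    then have "g v \<in> span S \<and> v - g v \<in> span T"
      by (rule span_induct[OF _ sub]) (use f g in auto)
    moreover have "norm (g v) \<le> (B+1) * norm v" proof -
      have "norm (g v) \<le> B * norm v + 1 * norm v" using B(2)[of v] norm_ge_zero[of v] by linarith
      then show ?thesis by (simp only: distrib_right)
    qed
    moreover have "norm (v - g v) \<le> (B+1) * norm v"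
      using norm_triangle_ineq4[of v "g v"] B(2)[of v] by (simp add: algebra_simps)
    ultimately show "\<exists>p q. p \<in> span S \<and> q \<in> span T \<and> v = p + q \<and> norm p \<le> (B+1) * norm v \<and> norm q \<le> (B+1) * norm v"
      by (rule_tac x="g v" in exI, rule_tac x="v - g v" in exI) auto
  qed
qed

lemma core:
  fixes A B :: "'a::euclidean_space set"
  assumes cA: "closed A" "convex A" and cB: "closed B" "convex B"
    and A0: "0 \<in> A" and B0: "0 \<in> B" and r: "r > 0"
    and rA: "\<And>s. s \<in> span A \<Longrightarrow> norm s \<le> r \<Longrightarrow> s \<in> A"
    and rB: "\<And>s. s \<in> span B \<Longrightarrow> norm s \<le> r \<Longrightarrow> s \<in> B"
    and rho: "\<rho> > 0"
  shows "\<exists>\<kappa>>0. \<forall>x\<in>span (A \<union> B). norm x \<le> \<rho> \<longrightarrow> norm (x - drT A B x) \<ge> \<kappa> * infdist x (A \<inter> B)"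
proof -
  obtain K where K: "K > 0" and dec: "\<And>v. v \<in> span (A \<union> B) \<Longrightarrow> \<exists>p q. p \<in> span A \<and> q \<in> span B \<and> v = p + q \<and> norm p \<le> K * norm v \<and> norm q \<le> K * norm v"
    using decomp by blast
  define C where "C = K * (6 * \<rho> / r + 2)"
  have Cpos: "C > 0" unfolding C_def using K r rho by (simp add: add_pos_nonneg)
  show ?thesis
  proof (rule exI[of _ "1 / C"], intro conjI ballI impI)
    show "1 / C > 0" using Cpos by simp
    fix x assume x: "x \<in> span (A \<union> B)" and xr: "norm x \<le> \<rho>"
    define a where "a = closest_point A x"
    define y where "y = 2 *\<^sub>R a - x"
    define b where "b = closest_point B y"
    define u where "u = x - a"
    define e where "e = a - b"
    have Ane: "A \<noteq> {}" "B \<noteq> {}" using A0 B0 by auto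
    have aA: "a \<in> A" unfolding a_def using closest_point_in_set[OF cA(1) Ane(1)] .
    have bB: "b \<in> B" unfolding b_def using closest_point_in_set[OF cB(1) Ane(2)] .
    have eq: "norm (x - drT A B x) = norm e"
      unfolding drT_def reflector_def e_def b_def y_def a_def by (simp add: algebra_simps)
    have na: "norm a \<le> \<rho>"
      using closest_point_lipschitz[OF cA(2,1) Ane(1), of x 0] closest_point_self[OF A0] xr
      by (simp add: a_def dist_norm)
    have nb: "norm b \<le> 3 * \<rho>"
    proof -
      have "norm b \<le> norm y"
        using closest_point_lipschitz[OF cB(2,1) Ane(2), of y 0] closest_point_self[OF B0]
        by (simp add: b_def dist_norm)
      also have "\<dots> \<le> 2 * norm a + norm x" unfolding y_def
        using norm_triangle_ineq4[of "2 *\<^sub>R a" x] by simp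
      finally show ?thesis using na xr by simp
    qed
    have nu: "norm u \<le> 2 * \<rho>" unfolding u_def using norm_triangle_ineq4[of x a] na xr by simp
    have ua: "inner u a \<ge> 0"
      using closest_point_dot[OF cA(2,1) A0, of x] by (simp add: u_def a_def inner_diff_right)
    have ub: "inner (e - u) b \<ge> 0"
    proof -
      have h: "inner (y - b) (0 - b) \<le> 0" using closest_point_dot[OF cB(2,1) B0, of y] by (simp add: b_def)
      have "y - b = e - u" by (simp add: y_def e_def u_def algebra_simps scaleR_2)
      with h show ?thesis by simp
    qed
    have spA: "A \<subseteq> span (A \<union> B)" "B \<subseteq> span (A \<union> B)" by (auto intro: span_base)
    have uspan: "u \<in> span (A \<union> B)" unfolding u_def using x aA spA by (auto intro: span_diff)
    have espan: "e \<in> span (A \<union> B)" unfolding e_def using aA bB spA by (auto intro: span_diff)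
    obtain uA uB where uA: "uA \<in> span A" and uB: "uB \<in> span B" and udec: "u = uA + uB"
      and nuA: "norm uA \<le> K * norm u" and nuB: "norm uB \<le> K * norm u"
      using dec[OF uspan] by blast
    have c1: "inner u uA \<le> (K * norm u / r) * inner u a"
    proof (cases "uA = 0")
      case True then show ?thesis using ua K r by simp
    next
      case False
      define s where "s = (r / norm uA) *\<^sub>R uA"
      have "s \<in> A" using rA[of s] uA False r by (simp add: s_def span_scale)
      then have "inner u (s - a) \<le> 0"
        using closest_point_dot[OF cA(2,1), of s x] by (simp add: u_def a_def)
      then have "(r / norm uA) * inner u uA \<le> inner u a" by (simp add: s_def inner_diff_right)
      then have "inner u uA \<le> (norm uA / r) * inner u a" using False r
        by (simp add: field_simps)
      also have "\<dots> \<le> (K * norm u / r) * inner u a"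
        using nuA ua r by (intro mult_right_mono divide_right_mono) auto
      finally show ?thesis .
    qed
    have c2: "inner (u - e) uB \<le> (K * norm u / r) * inner (e - u) b"
    proof (cases "uB = 0")
      case True then show ?thesis using ub K r by simp
    next
      case False
      define s where "s = - (r / norm uB) *\<^sub>R uB"
      have "s \<in> B" using rB[of s] uB False r by (simp add: s_def span_scale span_neg)
      then have "inner (y - b) (s - b) \<le> 0"
        using closest_point_dot[OF cB(2,1), of s y] by (simp add: b_def)
      moreover have "y - b = e - u" by (simp add: y_def e_def u_def algebra_simps scaleR_2)
      ultimately have "inner (e - u) (s - b) \<le> 0" by simp
      then have "(r / norm uB) * inner (u - e) uB \<le> inner (e - u) b"
        by (simp add: s_def inner_diff_right inner_diff_left algebra_simps)
      then have "inner (u - e) uB \<le> (norm uB / r) * inner (e - u) b" using False r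
        by (simp add: field_simps)
      also have "\<dots> \<le> (K * norm u / r) * inner (e - u) b"
        using nuB ub r by (intro mult_right_mono divide_right_mono) auto
      finally show ?thesis .
    qed
    have sum: "inner u a + inner (e - u) b \<le> norm e * (5 * \<rho>)"
    proof -
      have "inner u a + inner (e - u) b = inner u e + inner e b"
        by (simp add: e_def inner_diff_right inner_diff_left inner_commute algebra_simps)
      also have "\<dots> \<le> norm u * norm e + norm e * norm b"
        using Cauchy_Schwarz_ineq2[of u e] Cauchy_Schwarz_ineq2[of e b] by simp
      also have "\<dots> \<le> norm e * (5 * \<rho>)"
      proof -
        have "norm u * norm e \<le> (2 * \<rho>) * norm e" using nu by (intro mult_right_mono) auto
        moreover have "norm e * norm b \<le> norm e * (3 * \<rho>)" using nb by (intro mult_left_mono) auto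
        ultimately show ?thesis by (simp add: algebra_simps)
      qed
      finally show ?thesis .
    qed
    have "norm u ^ 2 = inner u uA + inner (u - e) uB + inner e uB"
      by (simp add: power2_norm_eq_inner udec[symmetric] inner_diff_left algebra_simps)
      (simp add: udec inner_add_right)
    also have "\<dots> \<le> (K * norm u / r) * (inner u a + inner (e - u) b) + norm e * (K * norm u)"
    proof -
      have "inner e uB \<le> norm e * norm uB" using Cauchy_Schwarz_ineq2[of e uB] by simp
      also have "\<dots> \<le> norm e * (K * norm u)" using nuB by (intro mult_left_mono) auto
      finally have "inner e uB \<le> norm e * (K * norm u)" .
      with c1 c2 show ?thesis by (simp add: distrib_left)
    qed
    also have "\<dots> \<le> (K * norm u / r) * (norm e * (5 * \<rho>)) + norm e * (K * norm u)"
      using sum K r by (intro add_right_mono mult_left_mono) auto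
    also have "\<dots> = norm u * (K * norm e * (5 * \<rho> / r + 1))"
      using r by (simp add: field_simps)
    finally have "norm u ^ 2 \<le> norm u * (K * norm e * (5 * \<rho> / r + 1))" .
    then have ubound: "norm u \<le> K * norm e * (5 * \<rho> / r + 1)"
    proof (cases "norm u = 0")
      case True
      have "0 \<le> K * norm e * (5 * \<rho> / r + 1)" using K r rho by simp
      then show ?thesis using True by simp
    next
      case False
      then have "norm u > 0" by simp
      then show ?thesis using \<open>norm u ^ 2 \<le> _\<close> by (simp add: power2_eq_square)
    qed
    have "\<exists>z\<in>A \<inter> B. norm (a - z) \<le> K * norm e * (\<rho> / r + 1)"
    proof (cases "e = 0")
      case True then show ?thesis using aA bB by (auto simp: e_def)
    next
      case enz: False
      show ?thesis
      proof (cases "K * norm e \<ge> r")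
        case True
        have "1 \<le> K * norm e / r" using True r by simp
        then have "\<rho> * 1 \<le> \<rho> * (K * norm e / r)" using rho by (intro mult_left_mono) auto
        then have "norm a \<le> K * norm e * (\<rho> / r)" using na by (simp add: algebra_simps)
        also have "\<dots> \<le> K * norm e * (\<rho> / r + 1)" using K by (intro mult_left_mono) auto
        finally show ?thesis using A0 B0 by (intro bexI[of _ 0]) auto
      next
        case False
        define \<mu> where "\<mu> = K * norm e / r"
        have mu: "0 < \<mu>" "\<mu> < 1" using False K enz r by (auto simp: \<mu>_def)
        obtain p q where p: "p \<in> span A" and q: "q \<in> span B" and edec: "e = p + q"
          and np: "norm p \<le> K * norm e" and nq: "norm q \<le> K * norm e"
          using dec[OF espan] by blast
        define z where "z = (1 - \<mu>) *\<^sub>R (a - p)"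
        define s where "s = - ((1 - \<mu>) / \<mu>) *\<^sub>R p"
        define t where "t = ((1 - \<mu>) / \<mu>) *\<^sub>R q"
        have le: "(1 - \<mu>) / \<mu> * (K * norm e) \<le> r"
        proof -
          have "K * norm e = \<mu> * r" using r by (simp add: \<mu>_def)
          then have "(1 - \<mu>) / \<mu> * (K * norm e) = (1 - \<mu>) * r" using mu by simp
          also have "\<dots> \<le> r" using mu r by simp
          finally show ?thesis .
        qed
        have sA: "s \<in> A"
        proof (rule rA)
          show "s \<in> span A" unfolding s_def using p by (simp add: span_scale span_neg)
          have "norm s = (1 - \<mu>) / \<mu> * norm p" using mu by (simp add: s_def)
          also have "\<dots> \<le> (1 - \<mu>) / \<mu> * (K * norm e)" using np mu by (intro mult_left_mono) auto
          finally show "norm s \<le> r" using le by simp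
        qed
        have tB: "t \<in> B"
        proof (rule rB)
          show "t \<in> span B" unfolding t_def using q by (simp add: span_scale)
          have "norm t = (1 - \<mu>) / \<mu> * norm q" using mu by (simp add: t_def)
          also have "\<dots> \<le> (1 - \<mu>) / \<mu> * (K * norm e)" using nq mu by (intro mult_left_mono) auto
          finally show "norm t \<le> r" using le by simp
        qed
        have ms: "\<mu> *\<^sub>R s = - ((1 - \<mu>) *\<^sub>R p)" using mu by (simp add: s_def)
        have mt: "\<mu> *\<^sub>R t = (1 - \<mu>) *\<^sub>R q" using mu by (simp add: t_def)
        have z1: "z = (1 - \<mu>) *\<^sub>R a + \<mu> *\<^sub>R s" unfolding ms by (simp add: z_def algebra_simps)
        have "a - p = b + q" using edec by (simp add: e_def algebra_simps)
        then have z2: "z = (1 - \<mu>) *\<^sub>R b + \<mu> *\<^sub>R t" unfolding mt z_def by (simp add: scaleR_right_distrib[symmetric])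
        have zA: "z \<in> A" unfolding z1 using convexD_alt[OF cA(2) aA sA, of \<mu>] mu by simp
        have zB: "z \<in> B" unfolding z2 using convexD_alt[OF cB(2) bB tB, of \<mu>] mu by simp
        have "a - z = \<mu> *\<^sub>R a + (1 - \<mu>) *\<^sub>R p" by (simp add: z_def algebra_simps)
        then have "norm (a - z) \<le> \<mu> * norm a + (1 - \<mu>) * norm p"
          using norm_triangle_ineq[of "\<mu> *\<^sub>R a" "(1 - \<mu>) *\<^sub>R p"] mu by simp
        also have "\<dots> \<le> \<mu> * \<rho> + 1 * (K * norm e)"
          using mu na np by (intro add_mono mult_mono) auto
        also have "\<dots> = K * norm e * (\<rho> / r + 1)" using r by (simp add: \<mu>_def field_simps)
        finally show ?thesis using zA zB by blast
      qed
    qed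
    then obtain z where z: "z \<in> A \<inter> B" and nz: "norm (a - z) \<le> K * norm e * (\<rho> / r + 1)" by blast
    have "infdist x (A \<inter> B) \<le> norm (x - z)" using infdist_le[OF z, of x] by (simp add: dist_norm)
    also have "\<dots> \<le> norm u + norm (a - z)"
      using norm_triangle_ineq[of u "a - z"] by (simp add: u_def)
    also have "\<dots> \<le> K * norm e * (5 * \<rho> / r + 1) + K * norm e * (\<rho> / r + 1)"
      using ubound nz by simp
    also have "\<dots> = C * norm e" unfolding C_def using r by (simp add: field_simps)
    finally have "infdist x (A \<inter> B) \<le> C * norm e" .
    then show "1 / C * infdist x (A \<inter> B) \<le> norm (x - drT A B x)"
      unfolding eq using Cpos by (simp add: field_simps)
  qed
qed


lemma cp_transl:
  fixes S :: "'a::euclidean_space set"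
  assumes "closed S" "convex S" "S \<noteq> {}"
  shows "closest_point ((+) v ` S) (v + x) = v + closest_point S x"
proof -
  have "v + closest_point S x = closest_point ((+) v ` S) (v + x)"
  proof (rule closest_point_unique)
    show "convex ((+) v ` S)" using assms by (simp add: convex_translation)
    show "closed ((+) v ` S)" using assms by (simp add: closed_translation)
    show "v + closest_point S x \<in> (+) v ` S" using closest_point_in_set[OF assms(1,3)] by auto
    show "\<forall>z\<in>(+) v ` S. dist (v + x) (v + closest_point S x) \<le> dist (v + x) z"
      using closest_point_le[OF assms(1)] by (auto simp: dist_add_cancel)
  qed
  then show ?thesis by simp
qed

lemma drT_transl:
  fixes A B :: "'a::euclidean_space set"
  assumes "closed A" "convex A" "A \<noteq> {}" "closed B" "convex B" "B \<noteq> {}"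
  shows "drT ((+) v ` A) ((+) v ` B) (v + x) = v + drT A B x"
proof -
  have "reflector ((+) v ` A) (v + x) = v + reflector A x"
    unfolding reflector_def cp_transl[OF assms(1-3)] by (simp add: algebra_simps scaleR_2)
  then show ?thesis unfolding drT_def
    using cp_transl[OF assms(1-3), of v x] cp_transl[OF assms(4-6), of v "reflector A x"]
    by (simp only:) (simp add: algebra_simps)
qed

lemma infdist_transl: fixes v :: "'a::euclidean_space" shows "infdist (v + x) ((+) v ` S) = infdist x S"
  by (simp add: infdist_def image_image dist_add_cancel)

theorem lemma4p3:
  fixes A B :: "'a::euclidean_space set"
  assumes "closed A" "convex A" "closed B" "convex B"
    and "rel_interior A \<inter> rel_interior B \<noteq> {}"
  shows "\<forall>\<rho>>0. \<exists>\<kappa>>0. \<forall>x \<in> affine hull (A \<union> B). norm x \<le> \<rho> \<longrightarrow>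
           norm (x - drT A B x) \<ge> \<kappa> * infdist x (A \<inter> B)"
proof (intro allI impI)
  fix \<rho> :: real assume rho: "\<rho> > 0"
  obtain c where c: "c \<in> rel_interior A" "c \<in> rel_interior B" using assms(5) by blast
  obtain eA where eA: "eA > 0" "ball c eA \<inter> affine hull A \<subseteq> A" "c \<in> A"
    using c(1) mem_rel_interior_ball by blast
  obtain eB where eB: "eB > 0" "ball c eB \<inter> affine hull B \<subseteq> B" "c \<in> B"
    using c(2) mem_rel_interior_ball by blast
  define r where "r = min eA eB / 2"
  have r: "r > 0" "r < eA" "r < eB" using eA eB by (auto simp: r_def)
  define A' where "A' = (+) (-c) ` A"
  define B' where "B' = (+) (-c) ` B"
  have A'0: "0 \<in> A'" unfolding A'_def using eA(3) by (auto intro: image_eqI[of _ _ c])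
  have B'0: "0 \<in> B'" unfolding B'_def using eB(3) by (auto intro: image_eqI[of _ _ c])
  have hA: "affine hull A' = (+) (-c) ` (affine hull A)" unfolding A'_def by (rule affine_hull_translation)
  have hB: "affine hull B' = (+) (-c) ` (affine hull B)" unfolding B'_def by (rule affine_hull_translation)
  have AB': "A' \<union> B' = (+) (-c) ` (A \<union> B)" unfolding A'_def B'_def by auto
  have hAB: "affine hull (A' \<union> B') = (+) (-c) ` (affine hull (A \<union> B))" unfolding AB' by (rule affine_hull_translation)
  have "0 \<in> affine hull A'" using A'0 by (rule hull_inc)
  then have spanA: "span A' = (+) (-c) ` (affine hull A)" using affine_hull_span_0 hA by metis
  have "0 \<in> affine hull B'" using B'0 by (rule hull_inc)
  then have spanB: "span B' = (+) (-c) ` (affine hull B)" using affine_hull_span_0 hB by metis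
  have "0 \<in> A' \<union> B'" using A'0 by simp
  then have "0 \<in> affine hull (A' \<union> B')" by (rule hull_inc)
  then have spanAB: "span (A' \<union> B') = (+) (-c) ` (affine hull (A \<union> B))" using affine_hull_span_0 hAB by metis
  have rA: "s \<in> A'" if "s \<in> span A'" "norm s \<le> r" for s
  proof -
    have "c + s \<in> affine hull A" using that(1) spanA by auto
    moreover have "c + s \<in> ball c eA" using that(2) r by (simp add: dist_norm)
    ultimately have "c + s \<in> A" using eA(2) by auto
    then show ?thesis unfolding A'_def by (auto intro: image_eqI[of _ _ "c + s"])
  qed
  have rB: "s \<in> B'" if "s \<in> span B'" "norm s \<le> r" for s
  proof -
    have "c + s \<in> affine hull B" using that(1) spanB by auto
    moreover have "c + s \<in> ball c eB" using that(2) r by (simp add: dist_norm)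
    ultimately have "c + s \<in> B" using eB(2) by auto
    then show ?thesis unfolding B'_def by (auto intro: image_eqI[of _ _ "c + s"])
  qed
  have cl: "closed A'" "convex A'" "closed B'" "convex B'"
    unfolding A'_def B'_def using closed_translation[OF assms(1)] convex_translation[OF assms(2)]
      closed_translation[OF assms(3)] convex_translation[OF assms(4)] by blast+
  obtain \<kappa> where k: "\<kappa> > 0" and kk: "\<forall>x\<in>span (A' \<union> B'). norm x \<le> \<rho> + norm c \<longrightarrow> norm (x - drT A' B' x) \<ge> \<kappa> * infdist x (A' \<inter> B')"
  proof -
    have pos: "\<rho> + norm c > 0" using rho by (simp add: add_pos_nonneg)
    show ?thesis using core[OF cl(1,2) cl(3,4) A'0 B'0 r(1) rA rB pos] that by blast
  qed
  show "\<exists>\<kappa>>0. \<forall>x \<in> affine hull (A \<union> B). norm x \<le> \<rho> \<longrightarrow> norm (x - drT A B x) \<ge> \<kappa> * infdist x (A \<inter> B)"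
  proof (intro exI[of _ \<kappa>] conjI ballI impI)
    show "\<kappa> > 0" by fact
    fix x assume x: "x \<in> affine hull (A \<union> B)" and xr: "norm x \<le> \<rho>"
    have "-c + x \<in> span (A' \<union> B')" using x spanAB by auto
    moreover have "norm (-c + x) \<le> \<rho> + norm c" using norm_triangle_ineq[of "-c" x] xr by simp
    ultimately have h: "norm ((-c + x) - drT A' B' (-c + x)) \<ge> \<kappa> * infdist (-c + x) (A' \<inter> B')"
      using kk by blast
    have "drT A' B' (-c + x) = -c + drT A B x"
      unfolding A'_def B'_def using drT_transl[OF assms(1,2) _ assms(3,4)] eA(3) eB(3) by blast
    moreover have "A' \<inter> B' = (+) (-c) ` (A \<inter> B)" unfolding A'_def B'_def by auto
    ultimately show "norm (x - drT A B x) \<ge> \<kappa> * infdist x (A \<inter> B)"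
      using h infdist_transl[of "-c" x "A \<inter> B"] by (simp add: algebra_simps)
  qed
qed

end
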